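(* Let $j\ge 0$ be an integer and let $T_j$ be the poset defined below, with its rank function $\rho$. Then $$\sum_{I\in J(T_j)}\ \sum_{a\in I}\rho(a)=\frac{j^2+5j+2}{8j+4}\binom{2j+2}{j+1}-4^j.$$
   Context: For an integer $j\ge 0$, let $T_j$ be the set of positive integers that cannot be written as $xj+y(j+1)$ with $x,y$ nonnegative integers. For $j\le 1$ this set is empty. $T_j$ is partially ordered by taking the transitive closure of the covering relations: $a$ covers $b$ whenever $a-b\in\{j,j+1\}$. The minimal elements of $T_j$ are $1,2,\dots,j-1$. These have rank $0$, and $\rho(a)$ is the rank of $a$, namely the length of a maximal chain from a minimal element up to $a$ (this poset is graded). $J(T_j)$ is the set of order ideals of $T_j$, i.e., subsets $I$ such that $a\in I$ and $b\le a$ imply $b\in I$. The empty set is an order ideal. *)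

theory Defs
  imports "HOL-Analysis.Analysis"
begin

definition T :: "nat \<Rightarrow> nat set" where
  "T j = {n. 0 < n \<and> \<not> (\<exists>x y. n = x * j + y * (j + 1))}"

definition covers :: "nat \<Rightarrow> nat \<Rightarrow> nat \<Rightarrow> bool" where
  "covers j a b \<longleftrightarrow> a \<in> T j \<and> b \<in> T j \<and> b < a \<and> (a - b = j \<or> a - b = j + 1)"

definition Tle :: "nat \<Rightarrow> nat \<Rightarrow> nat \<Rightarrow> bool" where
  "Tle j b a \<longleftrightarrow> b \<in> T j \<and> a \<in> T j \<and> (b, a) \<in> {(x, y). covers j y x}\<^sup>*"

definition minimal :: "nat \<Rightarrow> nat \<Rightarrow> bool" where
  "minimal j a \<longleftrightarrow> a \<in> T j \<and> (\<forall>b. Tle j b a \<longrightarrow> b = a)"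

definition chain_to :: "nat \<Rightarrow> nat list \<Rightarrow> nat \<Rightarrow> bool" where
  "chain_to j cs a \<longleftrightarrow> cs \<noteq> [] \<and> minimal j (hd cs) \<and> last cs = a \<and>
     (\<forall>i. Suc i < length cs \<longrightarrow> covers j (cs ! Suc i) (cs ! i))"

definition rho :: "nat \<Rightarrow> nat \<Rightarrow> nat" where
  "rho j a = Max {length cs - 1 | cs. chain_to j cs a}"

definition ideals :: "nat \<Rightarrow> nat set set" where
  "ideals j = {I. I \<subseteq> T j \<and> (\<forall>a b. a \<in> I \<and> Tle j b a \<longrightarrow> b \<in> I)}"

end

theory Submission
  imports Defs
begin

lemma step_alg:
  fixes x E c B B' P :: real
  assumes x: "x \<ge> 0"
    and ih: "(8*x+28)*(E+P) = (x*x+11*x+26)*B"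
    and r1: "(x+5)*B' = 2*(2*x+9)*B"
    and r2: "2*(x+5)*(2*x+7)*c = (x+3)*(x+2)*B"
  shows "(8*x+36)*(4*E + c + 4*P) = (x*x+13*x+38)*B'"
proof -
  have "(2*(x+5)*(2*x+7)) * ((8*x+36)*(4*E + c + 4*P)) = (2*(x+5)*(2*x+7)) * ((x*x+13*x+38)*B')"
    using ih r1 r2 by algebra
  moreover have "2*(x+5)*(2*x+7) \<noteq> 0" using x by simp
  ultimately show ?thesis by simp
qed



declare binomial_Suc_Suc[simp del]

definition E :: "nat \<Rightarrow> nat \<Rightarrow> int" where
  "E k m = (\<Sum>i\<le>k. 4^(k-i) * int ((2*i+m-1) choose i))"

lemma E_0[simp]: "E 0 m = 1" by (simp add: E_def)

lemma E_Suc: "E (Suc k) m = 4 * E k m + int ((2*k + m + 1) choose Suc k)"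
proof -
  have "E (Suc k) m = (\<Sum>i\<le>k. 4^(Suc k-i) * int ((2*i+m-1) choose i)) + int ((2*k + m + 1) choose Suc k)"
    unfolding E_def by simp
  also have "(\<Sum>i\<le>k. 4^(Suc k-i) * int ((2*i+m-1) choose i)) = 4 * E k m"
    unfolding E_def sum_distrib_left
    by (rule sum.cong) (auto simp: Suc_diff_le)
  finally show ?thesis by simp
qed

lemma E_pascal: "E (Suc k) (Suc m) = E (Suc k) m + E k (m+2)"
proof -
  have a: "E (Suc k) (Suc m) = 4^Suc k + (\<Sum>i\<le>k. 4^(k-i) * int ((Suc (2*i+m+1)) choose Suc i))"
    unfolding E_def sum.atMost_Suc_shift by simp
  have b: "E (Suc k) m = 4^Suc k + (\<Sum>i\<le>k. 4^(k-i) * int ((2*i+m+1) choose Suc i))"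
    unfolding E_def sum.atMost_Suc_shift by simp
  have c: "E k (m+2) = (\<Sum>i\<le>k. 4^(k-i) * int ((2*i+m+1) choose i))"
    unfolding E_def by simp
  have d: "(\<Sum>i\<le>k. 4^(k-i) * int ((Suc (2*i+m+1)) choose Suc i)) =
     (\<Sum>i\<le>k. 4^(k-i) * int ((2*i+m+1) choose Suc i)) + (\<Sum>i\<le>k. 4^(k-i) * int ((2*i+m+1) choose i))"
    unfolding sum.distrib[symmetric] by (rule sum.cong) (simp_all only: binomial_Suc_Suc, simp add: algebra_simps)
  show ?thesis unfolding a b c d by simp
qed

lemma E_boundary: "4 * E k 0 - 4 * E k 1 + E k 2 = int ((2*k+1) choose (k+1))"
proof (induction k)
  case 0 then show ?case by simp
next
  case (Suc k)
  have s1: "(2*k+1) choose k = (2*k+1) choose (k+1)"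
    using binomial_symmetric[of k "2*k+1"] by simp
  have s2: "(2*k+2) choose (k+1) = 2 * ((2*k+1) choose (k+1))"
    using s1 binomial_Suc_Suc[of "2*k+1" k] by simp
  have s3: "(2*k+3) choose (k+1) = (2*k+3) choose (k+2)"
    using binomial_symmetric[of "k+1" "2*k+3"] by simp
  show ?case using Suc s2 s3 by (simp add: E_Suc algebra_simps eval_nat_numeral)
qed

definition F :: "nat \<Rightarrow> nat \<Rightarrow> int" where
  "F k h = 8*E k h - 12*E k (h+1) + 6*E k (h+2) - E k (h+3)"

lemma F_0: "F 0 h = 1" by (simp add: F_def)

lemma F_step: "F (Suc k) (Suc h) = F (Suc k) h + F k (h+2)"
  using E_pascal[of k h] E_pascal[of k "h+1"] E_pascal[of k "h+2"] E_pascal[of k "h+3"]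
  by (simp add: F_def algebra_simps eval_nat_numeral)

lemma F_base: "F (Suc k) 0 = F k 0 + F k 1"
  using E_pascal[of k 0] E_pascal[of k 1] E_pascal[of k 2] E_Suc[of k 0] E_boundary[of k]
  by (simp add: F_def algebra_simps eval_nat_numeral)

definition cA :: "nat \<Rightarrow> int" where "cA h = 2*int h*(int h+2)*(2*int h-1)"
definition cB :: "nat \<Rightarrow> int" where "cB h = (int h+2)*(-4*(int h)^2 + 5*int h - 3)"
definition cC :: "nat \<Rightarrow> int" where "cC h = (int h+2)*((int h)^2 - 2*int h+3)"

fun G6 :: "nat \<Rightarrow> nat \<Rightarrow> int" where
  "G6 0 h = 0"
| "G6 (Suc k) h = cA h * E k (h+2) + cB h * E k (h+3) + cC h * E k (h+4)"

lemma G6_step: "G6 (Suc k) (Suc h) = G6 (Suc k) h + 3*(int h+2)*(int h+1)*F k (h+2) + G6 k (h+2)"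
proof (cases k)
  case 0 then show ?thesis by (simp add: cA_def cB_def cC_def F_def algebra_simps power2_eq_square eval_nat_numeral)
next
  case (Suc k')
  show ?thesis using E_pascal[of k' "h+2"] E_pascal[of k' "h+3"] E_pascal[of k' "h+4"]
    by (simp add: Suc cA_def cB_def cC_def F_def algebra_simps power2_eq_square eval_nat_numeral)
qed

lemma G6_base: "G6 (Suc k) 0 = G6 k 0 + G6 k 1"
proof (cases k)
  case 0 then show ?thesis by (simp add: cA_def cB_def cC_def)
next
  case (Suc k')
  show ?thesis using E_pascal[of k' 3] E_pascal[of k' 2] 
    by (simp add: Suc cA_def cB_def cC_def algebra_simps eval_nat_numeral)
qed

fun cnt :: "nat \<Rightarrow> nat \<Rightarrow> nat" where
  "cnt 0 h = 1"
| "cnt (Suc k) h = (\<Sum>v\<le>Suc h. cnt k v)"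

fun wt :: "nat \<Rightarrow> nat \<Rightarrow> nat" where
  "wt 0 h = 0"
| "wt (Suc k) h = (\<Sum>v\<le>Suc h. (v choose 2) * cnt k v + wt k v)"

lemma F_sum: "F (Suc k) h = (\<Sum>v\<le>Suc h. F k v)"
proof (induction h)
  case 0 then show ?case using F_base[of k] by simp
next
  case (Suc h)
  have "(\<Sum>v\<le>Suc (Suc h). F k v) = (\<Sum>v\<le>Suc h. F k v) + F k (h+2)" by simp
  then show ?case using Suc F_step[of k h] by simp
qed

lemma cnt_F: "int (cnt k h) = F k h"
proof (induction k arbitrary: h)
  case 0 then show ?case by (simp add: F_0)
next
  case (Suc k) then show ?case by (simp add: F_sum)
qed

lemma six_choose2: "int (6 * (n choose 2)) = 3 * int n * (int n - 1)"
proof (induction n)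
  case 0 then show ?case by simp
next
  case (Suc n)
  have "Suc n choose 2 = n + (n choose 2)"
    using binomial_Suc_Suc[of n 1] by (simp add: numeral_2_eq_2)
  then show ?case using Suc by (simp add: algebra_simps)
qed

lemma choose2_01: "(0::nat) choose 2 = 0" "Suc 0 choose 2 = 0"
  by (simp_all add: binomial_eq_0)

lemma G6_sum: "G6 (Suc k) h = (\<Sum>v\<le>Suc h. int (6 * (v choose 2)) * F k v + G6 k v)"
proof (induction h)
  case 0 then show ?case using G6_base[of k] by (simp add: choose2_01)
next
  case (Suc h)
  have "(\<Sum>v\<le>Suc (Suc h). int (6 * (v choose 2)) * F k v + G6 k v) =
     (\<Sum>v\<le>Suc h. int (6 * (v choose 2)) * F k v + G6 k v) + (int (6 * ((h+2) choose 2)) * F k (h+2) + G6 k (h+2))"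
    by simp
  moreover have "int (6 * ((h+2) choose 2)) = 3*(int h+2)*(int h+1)"
    using six_choose2[of "h+2"] by (simp add: algebra_simps)
  ultimately show ?case using Suc G6_step[of k h] by simp
qed

lemma wt_G6: "int (6 * wt k h) = G6 k h"
proof (induction k arbitrary: h)
  case 0 then show ?case by simp
next
  case (Suc k)
  have "int (6 * wt (Suc k) h) = (\<Sum>v\<le>Suc h. int (6 * (v choose 2)) * int (cnt k v) + int (6 * wt k v))"
    by (simp add: sum_distrib_left algebra_simps)
  also have "\<dots> = (\<Sum>v\<le>Suc h. int (6 * (v choose 2)) * F k v + G6 k v)"
    using Suc by (simp add: cnt_F)
  also have "\<dots> = G6 (Suc k) h" by (rule G6_sum[symmetric])
  finally show ?case .
qed

lemma wt_E5: "int (wt (Suc (Suc k)) 0) = E k 5"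
proof -
  have "int (6 * wt (Suc (Suc k)) 0) = G6 (Suc (Suc k)) 0" by (rule wt_G6)
  also have "\<dots> = cA 0 * E (Suc k) 2 + cB 0 * E (Suc k) 3 + cC 0 * E (Suc k) 4"
    by (simp only: G6.simps) (simp add: numeral_2_eq_2)
  also have "\<dots> = 6 * E k 5"
    using E_pascal[of k 3] by (simp add: cA_def cB_def cC_def eval_nat_numeral)
  finally show ?thesis by simp
qed




lemma fact_plus2: "(fact (n+2) :: real) = real (n+2) * real (n+1) * fact n"
  by (simp add: algebra_simps numeral_2_eq_2)

lemma fact_plus1: "(fact (n+1) :: real) = real (n+1) * fact n"
  by (simp add: algebra_simps)

lemma binom_real: "k \<le> n \<Longrightarrow> real (n choose k) = fact n / (fact k * fact (n-k))"
  by (simp add: binomial_fact)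

lemma E5_mult: "real (8*k+28) * (real_of_int (E k 5) + 4^(k+3)) = real (k*k+11*k+26) * real ((2*k+8) choose (k+4))"
proof (induction k)
  case 0
  have "real (8 choose 4) = 70" by (simp add: binomial_fact fact_numeral)
  then show ?case by simp
next
  case (Suc k)
  define B where "B = real ((2*k+8) choose (k+4))"
  define B' where "B' = real ((2*k+10) choose (k+5))"
  define c where "c = real ((2*k + 5 + 1) choose Suc k)"
  define F8 :: real where "F8 = fact (2*k+8)"
  define K4 :: real where "K4 = fact (k+4)"
  define F6 :: real where "F6 = fact (2*k+6)"
  define K1 :: real where "K1 = fact (k+1)"
  have pos: "F8 > 0" "K4 > 0" "F6 > 0" "K1 > 0" unfolding F8_def K4_def F6_def K1_def by auto
  have hB: "B = F8 / (K4 * K4)"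
    unfolding B_def F8_def K4_def using binom_real[of "k+4" "2*k+8"] by (simp add: algebra_simps)
  have hB': "B' = (real (2*k+10) * real (2*k+9) * F8) / ((real (k+5) * K4) * (real (k+5) * K4))"
  proof -
    have "B' = fact (2*k+10) / (fact (k+5) * fact (k+5))"
      unfolding B'_def using binom_real[of "k+5" "2*k+10"] by (simp add: algebra_simps)
    moreover have "(fact (2*k+10)::real) = real (2*k+10) * real (2*k+9) * F8"
      using fact_plus2[of "2*k+8"] unfolding F8_def by (simp add: algebra_simps)
    moreover have "(fact (k+5)::real) = real (k+5) * K4"
      using fact_plus1[of "k+4"] unfolding K4_def by (simp add: algebra_simps)
    ultimately show ?thesis by simp
  qed
  have hc: "c = F6 / (K1 * (real (k+5) * K4))"
  proof -
    have "c = fact (2*k+6) / (fact (k+1) * fact (k+5))"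
      unfolding c_def using binom_real[of "k+1" "2*k+6"] by (simp add: algebra_simps)
    moreover have "(fact (k+5)::real) = real (k+5) * K4"
      using fact_plus1[of "k+4"] unfolding K4_def by (simp add: algebra_simps)
    ultimately show ?thesis unfolding F6_def K1_def by simp
  qed
  have hF8: "F8 = real (2*k+8) * real (2*k+7) * F6"
    using fact_plus2[of "2*k+6"] unfolding F8_def F6_def by (simp add: algebra_simps)
  have hK4: "K4 = real (k+4) * real (k+3) * real (k+2) * K1"
  proof -
    have "k+4 = Suc (Suc (Suc (k+1)))" by simp
    then have "(fact (k+4)::real) = fact (Suc (Suc (Suc (k+1))))" by (simp only:)
    also have "\<dots> = real (k+4) * real (k+3) * real (k+2) * fact (k+1)"
      by (simp only: fact_Suc) (simp add: algebra_simps)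
    finally show ?thesis unfolding K4_def K1_def .
  qed
  have r1: "real (k+5) * B' = 2 * real (2*k+9) * B"
  proof -
    obtain m where m: "m = real (k+5)" by simp
    have mp: "m > 0" using m by simp
    have t: "real (2*k+10) = 2 * m" using m by simp
    show ?thesis unfolding hB hB' t m[symmetric] using pos mp by (simp add: field_simps)
  qed
  have r2: "2 * real (k+5) * real (2*k+7) * c = real (k+3) * real (k+2) * B"
  proof -
    obtain a2 a3 a4 a5 b7 where ab: "a2 = real (k+2)" "a3 = real (k+3)" "a4 = real (k+4)"
      "a5 = real (k+5)" "b7 = real (2*k+7)" by simp
    have t: "real (2*k+8) = 2 * a4" using ab by simp
    have ps: "a2 > 0" "a3 > 0" "a4 > 0" "a5 > 0" "b7 > 0" using ab by simp_all
    have "2 * a5 * b7 * (F6 / (K1 * (a5 * (a4 * a3 * a2 * K1)))) =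
          a3 * a2 * (2 * a4 * b7 * F6 / ((a4 * a3 * a2 * K1) * (a4 * a3 * a2 * K1)))"
      using ps pos by (simp add: field_simps)
    then show ?thesis unfolding hB hc hF8 hK4 t ab[symmetric] by simp
  qed
  have ih: "(8*real k+28)*(real_of_int (E k 5) + 4^(k+3)) = (real k*real k+11*real k+26)*B"
    using Suc unfolding B_def by simp
  have r1': "(real k+5)*B' = 2*(2*real k+9)*B" using r1 by simp
  have r2': "2*(real k+5)*(2*real k+7)*c = (real k+3)*(real k+2)*B" using r2 by simp
  have st: "(8*real k+36)*(4*real_of_int (E k 5) + c + 4*4^(k+3)) = (real k*real k+13*real k+38)*B'"
    by (rule step_alg[OF _ ih r1' r2']) simp
  have eS: "real_of_int (E (Suc k) 5) = 4 * real_of_int (E k 5) + c"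
    by (simp add: E_Suc c_def)
  have p4: "(4::real)^(Suc k+3) = 4*4^(k+3)" by (simp add: power_Suc[symmetric] del: power_Suc)
  show ?case using st unfolding eS B'_def p4 by (simp add: algebra_simps)
qed

lemma E5_closed: "real_of_int (E k 5) = real ((k+3)^2 + 5*(k+3) + 2) / real (8*(k+3)+4)
     * real ((2*(k+3)+2) choose ((k+3)+1)) - 4^(k+3)"
proof -
  have "real_of_int (E k 5) + 4^(k+3) = real (k*k+11*k+26) * real ((2*k+8) choose (k+4)) / real (8*k+28)"
    using E5_mult[of k] by (simp add: field_simps)
  moreover have "(k+3)^2 + 5*(k+3) + 2 = k*k+11*k+26" by (simp add: power2_eq_square algebra_simps)
  moreover have "8*(k+3)+4 = 8*k+28" "2*(k+3)+2 = 2*k+8" "(k+3)+1 = k+4" by simp_all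
  ultimately show ?thesis by (simp add: algebra_simps)
qed




fun valid :: "nat \<Rightarrow> nat list \<Rightarrow> bool" where
  "valid h [] = True"
| "valid h (v#l) = (v \<le> Suc h \<and> valid v l)"

definition L :: "nat \<Rightarrow> nat \<Rightarrow> nat list set" where
  "L k h = {l. length l = k \<and> valid h l}"

definition stat :: "nat list \<Rightarrow> nat" where
  "stat l = (\<Sum>p<length l. (l!p) choose 2)"

lemma stat_Cons: "stat (v#l) = (v choose 2) + stat l"
  unfolding stat_def by (simp only: length_Cons sum.lessThan_Suc_shift) simp

lemma L_0: "L 0 h = {[]}" by (auto simp: L_def)

lemma L_Suc: "L (Suc k) h = (\<Union>v\<in>{..Suc h}. (Cons v) ` L k v)"
  unfolding L_def
  by (auto simp: length_Suc_conv)

lemma L_finite: "finite (L k h)"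
proof (induction k arbitrary: h)
  case 0 then show ?case by (simp add: L_0)
next
  case (Suc k) then show ?case by (simp add: L_Suc)
qed

lemma L_disj: "v \<noteq> w \<Longrightarrow> (Cons v) ` L k v \<inter> (Cons w) ` L k w = {}"
  by auto

lemma card_L: "card (L k h) = cnt k h"
proof (induction k arbitrary: h)
  case 0 then show ?case by (simp add: L_0)
next
  case (Suc k)
  have "card (L (Suc k) h) = (\<Sum>v\<le>Suc h. card ((Cons v) ` L k v))"
    unfolding L_Suc
    by (rule card_UN_disjoint) (auto simp: L_finite)
  also have "\<dots> = (\<Sum>v\<le>Suc h. cnt k v)"
    by (rule sum.cong) (auto simp: card_image Suc)
  finally show ?case by simp
qed

lemma sum_L: "(\<Sum>l\<in>L k h. stat l) = wt k h"
proof (induction k arbitrary: h)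
  case 0 then show ?case by (simp add: L_0 stat_def)
next
  case (Suc k)
  have "(\<Sum>l\<in>L (Suc k) h. stat l) = (\<Sum>v\<le>Suc h. (\<Sum>l\<in>(Cons v) ` L k v. stat l))"
    unfolding L_Suc
    by (rule sum.UNION_disjoint) (auto simp: L_finite)
  also have "\<dots> = (\<Sum>v\<le>Suc h. (\<Sum>l\<in>L k v. (v choose 2) + stat l))"
    by (rule sum.cong) (auto simp: sum.reindex stat_Cons)
  also have "\<dots> = (\<Sum>v\<le>Suc h. (v choose 2) * cnt k v + wt k v)"
    by (rule sum.cong) (auto simp: sum.distrib Suc card_L[symmetric])
  finally show ?case by simp
qed

lemma valid_nth0: "valid h l \<Longrightarrow> 0 < length l \<Longrightarrow> l!0 \<le> Suc h"
  by (cases l) auto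

lemma valid_nthSuc: "valid h l \<Longrightarrow> Suc p < length l \<Longrightarrow> l!(Suc p) \<le> Suc (l!p)"
proof (induction l arbitrary: h p)
  case Nil then show ?case by simp
next
  case (Cons v l)
  show ?case
  proof (cases p)
    case 0 then show ?thesis using Cons valid_nth0[of v l] by auto
  next
    case (Suc q) then show ?thesis using Cons by auto
  qed
qed

lemma valid_bound: "valid 0 l \<Longrightarrow> p < length l \<Longrightarrow> l!p \<le> Suc p"
proof (induction p)
  case 0 then show ?case using valid_nth0 by fastforce
next
  case (Suc p) then show ?case using valid_nthSuc[of 0 l p] by simp
qed

lemma valid_intro: "(\<forall>p<length l. l!p \<le> Suc (if p = 0 then h else l!(p-1))) \<Longrightarrow> valid h l"
proof (induction l arbitrary: h)
  case Nil then show ?case by simp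
next
  case (Cons v l)
  have "v \<le> Suc h" using Cons.prems by (metis length_Cons nth_Cons_0 zero_less_Suc)
  moreover have "valid v l"
  proof (rule Cons.IH, intro allI impI)
    fix p assume p: "p < length l"
    have "(v#l)!(Suc p) \<le> Suc (if Suc p = 0 then h else (v#l)!(Suc p - 1))"
      using Cons.prems[rule_format, of "Suc p"] p by simp
    then show "l ! p \<le> Suc (if p = 0 then v else l ! (p - 1))"
      by (cases p) auto
  qed
  ultimately show ?case by simp
qed




lemma T_char: assumes j: "0 < j" shows "a \<in> T j \<longleftrightarrow> a div j < a mod j"
proof
  assume a: "a \<in> T j"
  show "a div j < a mod j"
  proof (rule ccontr)
    assume "\<not> a div j < a mod j"
    then have le: "a mod j \<le> a div j" by simp
    obtain d where d: "a div j = a mod j + d" using le le_iff_add by blast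
    have "a = a div j * j + a mod j" by simp
    then have "a = d * j + (a mod j) * (j+1)" unfolding d by (simp add: algebra_simps)
    then show False using a unfolding T_def by blast
  qed
next
  assume lt: "a div j < a mod j"
  have pos: "0 < a" using lt by (cases "a = 0") auto
  have "\<not> (\<exists>x y. a = x * j + y * (j + 1))"
  proof
    assume "\<exists>x y. a = x * j + y * (j + 1)"
    then obtain x y where "a = x * j + y * (j + 1)" by blast
    then have xy: "a = (x + y) * j + y" by (simp add: algebra_simps)
    have "a mod j = y mod j" using xy by simp
    moreover have "a div j = x + y + y div j" using xy j by simp
    moreover have "y mod j \<le> y" by simp
    ultimately show False using lt by linarith
  qed
  then show "a \<in> T j" using pos unfolding T_def by blast
qed

lemma covers_dm:
  assumes j: "0 < j" and c: "covers j a b"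
  shows "a div j = Suc (b div j) \<and> (a mod j = b mod j \<or> a mod j = Suc (b mod j))"
proof -
  have aT: "a \<in> T j" and bT: "b \<in> T j" and ba: "b < a" and d: "a - b = j \<or> a - b = j + 1"
    using c unfolding covers_def by auto
  show ?thesis
  proof (cases "a - b = j")
    case True
    then have "a = b + j" using ba by simp
    then show ?thesis using j by (simp add: div_add_self2)
  next
    case False
    then have a: "a = Suc b + j" using d ba by simp
    have am: "a mod j = Suc b mod j" unfolding a by (rule mod_add_self2)
    have ad: "a div j = Suc b div j + 1" unfolding a using j by (intro div_add_self2) simp
    have "Suc (b mod j) \<noteq> j"
    proof
      assume "Suc (b mod j) = j"
      then have "a mod j = 0" using am by (simp add: mod_Suc)
      then show False using aT T_char[OF j] by simp
    qed
    then have "Suc b mod j = Suc (b mod j)" "Suc b div j = b div j"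
      by (simp_all add: mod_Suc div_Suc)
    then show ?thesis using am ad by simp
  qed
qed

definition el :: "nat \<Rightarrow> nat \<Rightarrow> nat \<Rightarrow> nat" where
  "el j x t = t * j + (x + t)"

lemma el_dm: assumes "x + t < j" shows "el j x t div j = t" "el j x t mod j = x + t"
  using assms unfolding el_def by simp_all

lemma el_T: assumes "0 < x" "x + t < j" shows "el j x t \<in> T j"
  using assms el_dm[OF assms(2)] T_char[of j] by simp

lemma decode: assumes j: "0 < j" and a: "a \<in> T j"
  shows "a = el j (a mod j - a div j) (a div j)" "0 < a mod j - a div j"
    "(a mod j - a div j) + a div j < j"
proof -
  have lt: "a div j < a mod j" using a T_char[OF j] by simp
  show "a = el j (a mod j - a div j) (a div j)"
    unfolding el_def using lt div_mult_mod_eq[of a j] by simp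
  show "0 < a mod j - a div j" using lt by simp
  show "(a mod j - a div j) + a div j < j" using lt j by simp
qed

lemma covers_up: assumes "0 < x" "x + Suc t < j" shows "covers j (el j x (Suc t)) (el j x t)"
  unfolding covers_def using el_T[of x "Suc t" j] el_T[of x t j] assms by (auto simp: el_def)

lemma covers_right: assumes "0 < x" "x + Suc t < j" shows "covers j (el j x (Suc t)) (el j (Suc x) t)"
  unfolding covers_def using el_T[of x "Suc t" j] el_T[of "Suc x" t j] assms by (auto simp: el_def)

lemma covers_Tle: "covers j a b \<Longrightarrow> Tle j b a"
  unfolding Tle_def by (auto simp: covers_def)

lemma minimal_div: assumes j: "0 < j" and m: "minimal j a" shows "a div j = 0"
proof (rule ccontr)
  assume ne: "a div j \<noteq> 0"
  have aT: "a \<in> T j" using m unfolding minimal_def by simp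
  have lt: "a div j < a mod j" using aT T_char[OF j] by simp
  have ge: "a \<ge> j" using ne div_less[of a j] by linarith
  define b where "b = a - j"
  have ab: "a = b + j" using ge b_def by simp
  have bd: "b div j = a div j - 1" and bm: "b mod j = a mod j"
    using ab j by (simp_all add: div_add_self2)
  have "b \<in> T j" using T_char[OF j] bd bm lt by simp
  then have "covers j a b" using aT ab j unfolding covers_def by simp
  then have "Tle j b a" by (rule covers_Tle)
  then have "b = a" using m unfolding minimal_def by blast
  then show False using ab j by simp
qed

lemma chain_div:
  assumes j: "0 < j" and c: "chain_to j cs a"
  shows "a div j = length cs - 1"
proof -
  have hd0: "hd cs div j = 0" using c minimal_div[OF j] unfolding chain_to_def by blast
  have ne: "cs \<noteq> []" using c unfolding chain_to_def by simp
  have cov: "\<And>i. Suc i < length cs \<Longrightarrow> covers j (cs ! Suc i) (cs ! i)"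
    using c unfolding chain_to_def by blast
  have "\<And>i. i < length cs \<Longrightarrow> cs ! i div j = i"
  proof -
    fix i show "i < length cs \<Longrightarrow> cs ! i div j = i"
    proof (induction i)
      case 0 then show ?case using hd0 ne by (simp add: hd_conv_nth)
    next
      case (Suc i) then show ?case using covers_dm[OF j cov[of i]] by simp
    qed
  qed
  moreover have "a = cs ! (length cs - 1)" using c ne unfolding chain_to_def by (simp add: last_conv_nth)
  ultimately show ?thesis using ne by simp
qed

lemma small_minimal: assumes j: "0 < j" and x: "0 < x" "x < j" shows "minimal j x"
proof -
  have xT: "x \<in> T j" using T_char[OF j] x by simp
  have "\<And>b. Tle j b x \<Longrightarrow> b = x"
  proof -
    fix b assume "Tle j b x"
    then have r: "(b, x) \<in> {(u, v). covers j v u}\<^sup>*" unfolding Tle_def by simp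
    from r show "b = x"
    proof (cases rule: rtranclE)
      case base then show ?thesis by simp
    next
      case (step c)
      then have "covers j x c" by simp
      then show ?thesis using x unfolding covers_def by auto
    qed
  qed
  then show ?thesis using xT unfolding minimal_def by blast
qed

lemma chain_exists: assumes j: "0 < j" and a: "a \<in> T j"
  shows "\<exists>cs. chain_to j cs a \<and> length cs = Suc (a div j)"
proof -
  define x where "x = a mod j - a div j"
  define t where "t = a div j"
  have x0: "0 < x" and xt: "x + t < j" and ae: "a = el j x t"
    using decode[OF j a] unfolding x_def t_def by auto
  define cs where "cs = map (\<lambda>i. el j x i) [0..<Suc t]"
  have len: "length cs = Suc t" unfolding cs_def by simp
  have nth: "\<And>i. i < Suc t \<Longrightarrow> cs ! i = el j x i" unfolding cs_def
    by (simp del: upt_Suc)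
  have ne: "cs \<noteq> []" using len by auto
  have "hd cs = x" using nth[of 0] ne by (simp add: hd_conv_nth el_def)
  moreover have "minimal j x" using small_minimal[OF j x0] xt by simp
  moreover have "last cs = a" using nth[of t] ne len ae by (simp add: last_conv_nth)
  moreover have "\<forall>i. Suc i < length cs \<longrightarrow> covers j (cs ! Suc i) (cs ! i)"
    using nth len covers_up[OF x0] xt by auto
  ultimately have "chain_to j cs a" unfolding chain_to_def using ne by simp
  then show ?thesis using len t_def by blast
qed

lemma rho_T: assumes j: "0 < j" and a: "a \<in> T j" shows "rho j a = a div j"
proof -
  have "{length cs - 1 | cs. chain_to j cs a} = {a div j}"
  proof
    show "{length cs - 1 | cs. chain_to j cs a} \<subseteq> {a div j}" using chain_div[OF j] by auto
    show "{a div j} \<subseteq> {length cs - 1 | cs. chain_to j cs a}"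
    proof
      fix y assume "y \<in> {a div j}"
      then have y: "y = a div j" by simp
      obtain cs where "chain_to j cs a" "length cs = Suc (a div j)" using chain_exists[OF j a] by blast
      then show "y \<in> {length cs - 1 | cs. chain_to j cs a}" using y by force
    qed
  qed
  then show ?thesis unfolding rho_def by simp
qed




definition phi :: "nat \<Rightarrow> nat list \<Rightarrow> nat set" where
  "phi n l = {a \<in> T (Suc n). a div Suc n < l ! (n - (a mod Suc n - a div Suc n))}"

lemma phi_el:
  assumes "0 < x" "x + t \<le> n"
  shows "el (Suc n) x t \<in> phi n l \<longleftrightarrow> t < l ! (n - x)"
proof -
  have lt: "x + t < Suc n" using assms by simp
  show ?thesis unfolding phi_def using el_T[OF assms(1) lt] el_dm[OF lt] by simp
qed

lemma phi_closed1:
  assumes l: "l \<in> L n 0" and c: "covers (Suc n) a b" and a: "a \<in> phi n l"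
  shows "b \<in> phi n l"
proof -
  let ?J = "Suc n"
  have J: "0 < ?J" by simp
  have len: "length l = n" and vl: "valid 0 l" using l unfolding L_def by auto
  have aT: "a \<in> T ?J" and bT: "b \<in> T ?J" using c unfolding covers_def by auto
  obtain A1 A2 B1 B2 where v: "A1 = a div ?J" "A2 = a mod ?J" "B1 = b div ?J" "B2 = b mod ?J" by simp
  have ta: "A1 < l ! (n - (A2 - A1))" using a v unfolding phi_def by simp
  have alt: "A1 < A2" and blt: "B1 < B2" using aT bT T_char[OF J] v by auto
  have amn: "A2 \<le> n" and bmn: "B2 \<le> n" using mod_less_divisor[OF J, of a] mod_less_divisor[OF J, of b] v by linarith+
  have dm: "A1 = Suc B1 \<and> (A2 = B2 \<or> A2 = Suc B2)"
    using covers_dm[OF J c] v by simp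
  have goal: "B1 < l ! (n - (B2 - B1))"
  proof (cases "A2 = B2")
    case True
    define x where "x = A2 - A1"
    have xn: "x < n" and x1: "B2 - B1 = Suc x" using True dm blt bmn unfolding x_def by auto
    define p where "p = n - Suc x"
    have p1: "Suc p = n - x" using xn unfolding p_def by simp
    have "Suc p < length l" using p1 len alt x_def by simp
    then have "l ! Suc p \<le> Suc (l ! p)" by (rule valid_nthSuc[OF vl])
    then have "B1 < l ! p" using ta p1 dm x_def by simp
    then show ?thesis using x1 p_def by simp
  next
    case False
    then have "A2 = Suc B2" using dm by simp
    then have "B2 - B1 = A2 - A1" using dm by simp
    then show ?thesis using ta dm by simp
  qed
  show ?thesis unfolding phi_def using bT goal v by simp
qed

lemma phi_ideal: assumes l: "l \<in> L n 0" shows "phi n l \<in> ideals (Suc n)"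
proof -
  have sub: "phi n l \<subseteq> T (Suc n)" unfolding phi_def by auto
  have "\<And>a b. a \<in> phi n l \<Longrightarrow> Tle (Suc n) b a \<Longrightarrow> b \<in> phi n l"
  proof -
    fix a b assume a: "a \<in> phi n l" and "Tle (Suc n) b a"
    then have r: "(b, a) \<in> {(x, y). covers (Suc n) y x}\<^sup>*" unfolding Tle_def by simp
    have "a \<in> phi n l \<longrightarrow> b \<in> phi n l"
      using r
    proof (induction rule: rtrancl_induct)
      case base then show ?case by simp
    next
      case (step y z)
      then show ?case using phi_closed1[OF l, of z y] by auto
    qed
    then show "b \<in> phi n l" using a by simp
  qed
  then show ?thesis unfolding ideals_def using sub by blast
qed

lemma phi_inj_aux:
  assumes l1: "l1 \<in> L n 0" and l2: "l2 \<in> L n 0" and eq: "phi n l1 = phi n l2" and p: "p < n"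
  shows "\<not> l1 ! p < l2 ! p"
proof
  assume lt: "l1 ! p < l2 ! p"
  have "l2 ! p \<le> Suc p" using l2 p valid_bound unfolding L_def by auto
  define t where "t = l1 ! p"
  define x where "x = n - p"
  have x0: "0 < x" and xt: "x + t \<le> n" and nx: "n - x = p" using p lt \<open>l2 ! p \<le> Suc p\<close>
    unfolding x_def t_def by auto
  have "el (Suc n) x t \<in> phi n l2" using phi_el[OF x0 xt] nx lt t_def by simp
  moreover have "el (Suc n) x t \<notin> phi n l1" using phi_el[OF x0 xt] nx t_def by simp
  ultimately show False using eq by simp
qed

lemma phi_inj: "inj_on (phi n) (L n 0)"
proof
  fix l1 l2 assume l1: "l1 \<in> L n 0" and l2: "l2 \<in> L n 0" and eq: "phi n l1 = phi n l2"
  have len: "length l1 = n" "length l2 = n" using l1 l2 unfolding L_def by auto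
  show "l1 = l2"
  proof (rule nth_equalityI)
    show "length l1 = length l2" using len by simp
    fix p assume "p < length l1"
    then have p: "p < n" using len by simp
    show "l1 ! p = l2 ! p"
      using phi_inj_aux[OF l1 l2 eq p] phi_inj_aux[OF l2 l1 eq[symmetric] p] by simp
  qed
qed

lemma phi_surj: assumes I: "I \<in> ideals (Suc n)" shows "I \<in> phi n ` L n 0"
proof -
  let ?J = "Suc n"
  have J: "0 < ?J" by simp
  have IT: "I \<subseteq> T ?J" and Icl: "\<And>a b. a \<in> I \<Longrightarrow> Tle ?J b a \<Longrightarrow> b \<in> I"
    using I unfolding ideals_def by auto
  define S where "S x = {t. x + t \<le> n \<and> el ?J x t \<in> I}" for x
  define D where "D x = (LEAST t. t \<notin> S x)" for x
  have a1: "t \<in> S x" if "0 < x" "Suc t \<in> S x" for x t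
  proof -
    have "x + Suc t < ?J" using that unfolding S_def by simp
    then have "covers ?J (el ?J x (Suc t)) (el ?J x t)" using covers_up that(1) by blast
    then have "el ?J x t \<in> I" using Icl covers_Tle that(2) unfolding S_def by blast
    then show ?thesis using that(2) unfolding S_def by simp
  qed
  have a2: "s \<in> S x" if "0 < x" "t \<in> S x" "s \<le> t" for x t s
  proof -
    have gen: "s + d \<in> S x \<Longrightarrow> s \<in> S x" for d
    proof (induction d)
      case 0 then show ?case by simp
    next
      case (Suc d) then show ?case using a1[OF that(1), of "s+d"] by simp
    qed
    have "s + (t - s) = t" using that(3) by simp
    then show ?thesis using gen[of "t - s"] that(2) by simp
  qed
  have ex: "\<exists>t. t \<notin> S x" for x
    by (rule exI[of _ "Suc n"]) (simp add: S_def)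
  have b: "t \<in> S x \<longleftrightarrow> t < D x" if "0 < x" for x t
  proof
    assume ts: "t \<in> S x"
    show "t < D x"
    proof (rule ccontr)
      assume "\<not> t < D x"
      then have "D x \<in> S x" using a2[OF that ts] by simp
      moreover have "D x \<notin> S x" unfolding D_def by (rule LeastI_ex[OF ex])
      ultimately show False by simp
    qed
  next
    assume "t < D x"
    then show "t \<in> S x" unfolding D_def using not_less_Least by blast
  qed
  have c: "t \<in> S (Suc x)" if "0 < x" "Suc t \<in> S x" for x t
  proof -
    have "x + Suc t < ?J" using that unfolding S_def by simp
    then have "covers ?J (el ?J x (Suc t)) (el ?J (Suc x) t)" using covers_right that(1) by blast
    then have "el ?J (Suc x) t \<in> I" using Icl covers_Tle that(2) unfolding S_def by blast
    then show ?thesis using that(2) unfolding S_def by simp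
  qed
  define l where "l = map (\<lambda>p. D (n - p)) [0..<n]"
  have len: "length l = n" unfolding l_def by simp
  have lnth: "l ! p = D (n - p)" if "p < n" for p using that unfolding l_def by simp
  have "valid 0 l"
  proof (rule valid_intro, intro allI impI)
    fix p assume p: "p < length l"
    show "l ! p \<le> Suc (if p = 0 then 0 else l ! (p - 1))"
    proof (cases p)
      case 0
      have "1 \<notin> S n" unfolding S_def by simp
      then have "D n \<le> 1" unfolding D_def by (rule Least_le)
      then show ?thesis using 0 lnth[of 0] p len by simp
    next
      case (Suc q)
      define x where "x = n - Suc q"
      have x0: "0 < x" and sx: "Suc x = n - q" using p len Suc unfolding x_def by auto
      have "D x \<le> Suc (D (Suc x))"
      proof (cases "D x \<le> 1")
        case True then show ?thesis by simp
      next
        case False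
        define s where "s = D x - 2"
        have s: "D x = Suc (Suc s)" using False unfolding s_def by simp
        have "Suc s \<in> S x" using b[OF x0] s by simp
        then have "s \<in> S (Suc x)" using c[OF x0] by simp
        then have "s < D (Suc x)" using b[of "Suc x"] by simp
        then show ?thesis using s by simp
      qed
      then show ?thesis using Suc lnth[of p] lnth[of q] p len x_def sx by simp
    qed
  qed
  then have lL: "l \<in> L n 0" unfolding L_def using len by simp
  have "phi n l = I"
  proof (intro set_eqI iffI)
    fix a assume a: "a \<in> phi n l"
    then have aT: "a \<in> T ?J" unfolding phi_def by simp
    define x where "x = a mod ?J - a div ?J"
    define t where "t = a div ?J"
    have x0: "0 < x" and xt: "x + t < ?J" and ae: "a = el ?J x t"
      using decode[OF J aT] unfolding x_def t_def by auto
    have "t < l ! (n - x)" using a unfolding phi_def x_def t_def by simp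
    moreover have "l ! (n - x) = D x" using lnth[of "n - x"] x0 xt by simp
    ultimately have "t \<in> S x" using b[OF x0] by simp
    then show "a \<in> I" using ae unfolding S_def by simp
  next
    fix a assume a: "a \<in> I"
    then have aT: "a \<in> T ?J" using IT by auto
    define x where "x = a mod ?J - a div ?J"
    define t where "t = a div ?J"
    have x0: "0 < x" and xt: "x + t < ?J" and ae: "a = el ?J x t"
      using decode[OF J aT] unfolding x_def t_def by auto
    have "t \<in> S x" unfolding S_def using a ae xt by simp
    then have "t < D x" using b[OF x0] by simp
    moreover have "l ! (n - x) = D x" using lnth[of "n - x"] x0 xt by simp
    ultimately show "a \<in> phi n l" unfolding phi_def using aT x_def t_def by simp
  qed
  then show ?thesis using lL by blast
qed

lemma ideals_eq: "ideals (Suc n) = phi n ` L n 0"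
  using phi_surj phi_ideal by blast

lemma sum_less_choose2: "(\<Sum>t<d. t) = d choose 2"
proof (induction d)
  case 0 then show ?case by simp
next
  case (Suc d)
  have "Suc d choose 2 = d + (d choose 2)"
    using binomial_Suc_Suc[of d 1] by (simp add: numeral_2_eq_2)
  then show ?case using Suc by simp
qed

lemma phi_sum: assumes l: "l \<in> L n 0" shows "(\<Sum>a\<in>phi n l. rho (Suc n) a) = stat l"
proof -
  let ?J = "Suc n"
  have J: "0 < ?J" by simp
  have len: "length l = n" and vl: "valid 0 l" using l unfolding L_def by auto
  define A where "A = (SIGMA x:{1..n}. {..<l ! (n - x)})"
  have bnd: "x + t < ?J" if "(x, t) \<in> A" for x t
  proof -
    have x: "1 \<le> x" "x \<le> n" and t: "t < l ! (n - x)" using that unfolding A_def by auto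
    have "l ! (n - x) \<le> Suc (n - x)" using valid_bound[OF vl, of "n - x"] len x by simp
    then show ?thesis using x t by linarith
  qed
  have seteq: "phi n l = (\<lambda>(x, t). el ?J x t) ` A"
  proof (intro set_eqI iffI)
    fix a assume a: "a \<in> phi n l"
    then have aT: "a \<in> T ?J" unfolding phi_def by simp
    define x where "x = a mod ?J - a div ?J"
    define t where "t = a div ?J"
    have x0: "0 < x" and xt: "x + t < ?J" and ae: "a = el ?J x t"
      using decode[OF J aT] unfolding x_def t_def by auto
    have "t < l ! (n - x)" using a unfolding phi_def x_def t_def by simp
    then have "(x, t) \<in> A" unfolding A_def using x0 xt by auto
    then show "a \<in> (\<lambda>(x, t). el ?J x t) ` A" using ae by force
  next
    fix a assume "a \<in> (\<lambda>(x, t). el ?J x t) ` A"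
    then obtain x t where xt: "(x, t) \<in> A" and ae: "a = el ?J x t" by auto
    have "0 < x" "x + t \<le> n" using xt bnd[OF xt] unfolding A_def by auto
    moreover have "t < l ! (n - x)" using xt unfolding A_def by auto
    ultimately show "a \<in> phi n l" using phi_el ae by simp
  qed
  have inj: "inj_on (\<lambda>(x, t). el ?J x t) A"
  proof (rule inj_onI, clarify)
    fix x1 t1 x2 t2 assume p1: "(x1, t1) \<in> A" and p2: "(x2, t2) \<in> A" and e: "el ?J x1 t1 = el ?J x2 t2"
    have "t1 = t2" using el_dm(1)[OF bnd[OF p1]] el_dm(1)[OF bnd[OF p2]] e by simp
    moreover have "x1 + t1 = x2 + t2" using el_dm(2)[OF bnd[OF p1]] el_dm(2)[OF bnd[OF p2]] e by simp
    ultimately show "x1 = x2 \<and> t1 = t2" by simp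
  qed
  have "(\<Sum>a\<in>phi n l. rho ?J a) = (\<Sum>(x, t)\<in>A. rho ?J (el ?J x t))"
    unfolding seteq by (subst sum.reindex[OF inj]) (simp add: case_prod_beta')
  also have "\<dots> = (\<Sum>(x, t)\<in>A. t)"
  proof (rule sum.cong, simp, clarify)
    fix x t assume p: "(x, t) \<in> A"
    have "0 < x" using p unfolding A_def by auto
    then have "el ?J x t \<in> T ?J" using el_T bnd[OF p] by blast
    then show "rho ?J (el ?J x t) = t" using rho_T[OF J] el_dm(1)[OF bnd[OF p]] by simp
  qed
  also have "\<dots> = (\<Sum>x\<in>{1..n}. \<Sum>t<l ! (n - x). t)"
    unfolding A_def by (rule sum.Sigma[symmetric]) auto
  also have "\<dots> = (\<Sum>x\<in>{1..n}. (l ! (n - x)) choose 2)"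
    by (simp add: sum_less_choose2)
  also have "\<dots> = (\<Sum>p<n. (l ! p) choose 2)"
    by (rule sum.reindex_bij_witness[of _ "\<lambda>p. n - p" "\<lambda>x. n - x"]) auto
  finally show ?thesis unfolding stat_def len .
qed

theorem main_sum: "(\<Sum>I\<in>ideals (Suc n). \<Sum>a\<in>I. rho (Suc n) a) = wt n 0"
proof -
  have "(\<Sum>I\<in>ideals (Suc n). \<Sum>a\<in>I. rho (Suc n) a) = (\<Sum>l\<in>L n 0. \<Sum>a\<in>phi n l. rho (Suc n) a)"
    unfolding ideals_eq by (subst sum.reindex[OF phi_inj]) simp
  also have "\<dots> = (\<Sum>l\<in>L n 0. stat l)"
    by (rule sum.cong) (simp_all add: phi_sum)
  also have "\<dots> = wt n 0" by (rule sum_L)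
  finally show ?thesis .
qed



theorem mainTheorem6:
  fixes j :: nat
  shows "real (\<Sum>I\<in>ideals j. \<Sum>a\<in>I. rho j a)
     = (real (j^2 + 5*j + 2) / real (8*j + 4)) * real ((2*j + 2) choose (j + 1)) - 4 ^ j"
proof (cases j)
  case 0
  have "T 0 = {}" unfolding T_def by auto
  then have "ideals 0 = {{}}" unfolding ideals_def by auto
  moreover have "real (2 choose 1) = 2" by simp
  ultimately show ?thesis using 0 by simp
next
  case (Suc n)
  have s: "real (\<Sum>I\<in>ideals j. \<Sum>a\<in>I. rho j a) = real (wt n 0)"
    unfolding Suc main_sum ..
  show ?thesis
  proof (cases n)
    case 0
    have "real (4 choose 2) = 6" by (simp add: binomial_fact fact_numeral)
    then have "4 choose Suc (Suc 0) = 6" by (simp add: numeral_2_eq_2)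
    then show ?thesis using s Suc 0 by simp
  next
    case (Suc m)
    note m = Suc
    show ?thesis
    proof (cases m)
      case 0
      have "real (6 choose 3) = 20" by (simp add: binomial_fact fact_numeral)
      then have "6 choose Suc (Suc (Suc 0)) = 20" by (simp add: numeral_3_eq_3)
      then show ?thesis using s \<open>j = Suc n\<close> m 0 by (simp add: choose2_01)
    next
      case (Suc k)
      have nn: "n = Suc (Suc k)" using m Suc by simp
      have "real (wt n 0) = real_of_int (E k 5)"
        unfolding nn by (subst wt_E5[symmetric]) (simp only: of_int_of_nat_eq)
      also have "\<dots> = real ((k+3)^2 + 5*(k+3) + 2) / real (8*(k+3)+4)
         * real ((2*(k+3)+2) choose ((k+3)+1)) - 4^(k+3)" by (rule E5_closed)
      also have "k + 3 = j" using \<open>j = Suc n\<close> m Suc by simp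
      finally show ?thesis using s by simp
    qed
  qed
qed


end
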